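(* Let $P$ be a finite poset, $\epsilon\in\{1,-1\}$ and $T^\xi$ ($\xi\in S^{(\epsilon)}$) a generator of $\omega^{(\epsilon)}$. Then $$\deg T^\xi\le\max\{q^{(\epsilon)}(x_0,y_0,\ldots,x_t,y_t): y_0,x_1,\ldots,y_{t-1},x_t \text{ is a } q^{(\epsilon)}\text{-reduced sequence satisfying condition N'},\ x_0=-\infty,\ y_t=\infty\}.$$
   Context: $P^\pm=P\cup\{-\infty,\infty\}$, $-\infty<z<\infty$ for $z\in P$; $P^-=P\cup\{-\infty\}$; $\xi^+(B)=\sum_{b\in B}\xi(b)$. Saturated chain: $x=z_0\lessdot\cdots\lessdot z_t=y$, length $t$. $q^{(\epsilon)}\mathrm{dist}(x,y)=\max\{\epsilon t:$ saturated chain of length $t$ from $x$ to $y$ in $P^\pm\}$. For $w_0<z_0>w_1<\cdots>w_s<z_s$ in $P^\pm$, $q^{(\epsilon)}(w_0,z_0,\ldots,w_s,z_s)=\sum_{\ell=0}^s q^{(\epsilon)}\mathrm{dist}(w_\ell,z_\ell)-\sum_{\ell=0}^{s-1}q^{(\epsilon)}\mathrm{dist}(w_{\ell+1},z_\ell)$. Condition N': $y_0>x_1<y_1>\cdots<y_{t-1}>x_t$ in $P$ and $y_i\not>x_j$ whenever $i\le j-2$ (empty sequence allowed, giving value $q^{(\epsilon)}\mathrm{dist}(-\infty,\infty)$). $q^{(\epsilon)}$-reduced: with $x_0=-\infty,y_t=\infty$, $q^{(\epsilon)}\mathrm{dist}(x_i,y_j)<q^{(\epsilon)}(x_i,y_i,\ldots,x_j,y_j)$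 whenever $0\le i<j\le t$ and $x_i<y_j$. $S^{(m)}=\{\xi\in\mathbb Z^{P^-}:\xi(x)\ge m\ \forall x\in P,\ \xi(-\infty)\ge\xi^+(C)+m$ for all maximal chains $C\}$. $R=\mathbb K[\mathcal C(P)]=\bigoplus_{S^{(0)}}\mathbb KT^\xi$ (Ehrhart ring of the chain polytope; $T^\xi=\prod T_x^{\xi(x)}$, $\deg T^\xi=\xi(-\infty)$), $\omega^{(1)}=\omega=\bigoplus_{S^{(1)}}\mathbb KT^\xi$ canonical ideal, $\omega^{(-1)}=R:\omega=\bigoplus_{S^{(-1)}}\mathbb KT^\xi$. A generator of $\omega^{(\epsilon)}$ is a monomial $T^\xi$, $\xi\in S^{(\epsilon)}$, not of the form $T^{\xi_1}T^{\xi_2}$ with $\xi_1\in S^{(0)}$, $\xi_1(-\infty)>0$, $\xi_2\in S^{(\epsilon)}$. *)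

theory Defs
  imports Main
begin

text \<open>The finite poset P is a finite subset of a type with a partial order (induced order).
  P^\<pm> = P with adjoined bottom NegInf (-\<infinity>) and top PosInf (\<infinity>).\<close>

datatype 'a ext = NegInf | Elem 'a | PosInf

fun ext_less :: "'a::order ext \<Rightarrow> 'a ext \<Rightarrow> bool" where
  "ext_less NegInf NegInf = False"
| "ext_less NegInf _ = True"
| "ext_less (Elem a) (Elem b) = (a < b)"
| "ext_less (Elem a) PosInf = True"
| "ext_less (Elem a) NegInf = False"
| "ext_less PosInf _ = False"

definition in_ext :: "'a set \<Rightarrow> 'a ext \<Rightarrow> bool" where
  "in_ext P a = (case a of Elem x \<Rightarrow> x \<in> P | _ \<Rightarrow> True)"

definition covers_ext :: "'a::order set \<Rightarrow> 'a ext \<Rightarrow> 'a ext \<Rightarrow> bool" where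
  "covers_ext P a b = (in_ext P a \<and> in_ext P b \<and> ext_less a b \<and>
     \<not> (\<exists>c. in_ext P c \<and> ext_less a c \<and> ext_less c b))"

definition sat_chain :: "'a::order set \<Rightarrow> 'a ext list \<Rightarrow> bool" where
  "sat_chain P zs = (zs \<noteq> [] \<and> (\<forall>z\<in>set zs. in_ext P z) \<and>
     (\<forall>i. Suc i < length zs \<longrightarrow> covers_ext P (zs ! i) (zs ! Suc i)))"

definition qdist :: "'a::order set \<Rightarrow> int \<Rightarrow> 'a ext \<Rightarrow> 'a ext \<Rightarrow> int" where
  "qdist P \<epsilon> x y = Max {\<epsilon> * int t | t. \<exists>zs. sat_chain P zs \<and> length zs = Suc t \<and>
                                         hd zs = x \<and> last zs = y}"

definition qseq :: "'a::order set \<Rightarrow> int \<Rightarrow> (nat \<Rightarrow> 'a ext) \<Rightarrow> (nat \<Rightarrow> 'a ext) \<Rightarrow> nat \<Rightarrow> int" where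
  "qseq P \<epsilon> w z s = (\<Sum>l\<in>{0..s}. qdist P \<epsilon> (w l) (z l)) - (\<Sum>l<s. qdist P \<epsilon> (w (Suc l)) (z l))"

text \<open>Sequence y_0,x_1,y_1,...,y_{t-1},x_t (x, y :: nat \<Rightarrow> 'a), extended by x_0 = -\<infinity>, y_t = \<infinity>.\<close>
definition xseq :: "(nat \<Rightarrow> 'a) \<Rightarrow> nat \<Rightarrow> 'a ext" where
  "xseq x i = (if i = 0 then NegInf else Elem (x i))"

definition yseq :: "nat \<Rightarrow> (nat \<Rightarrow> 'a) \<Rightarrow> nat \<Rightarrow> 'a ext" where
  "yseq t y i = (if i = t then PosInf else Elem (y i))"

definition condN :: "'a::order set \<Rightarrow> nat \<Rightarrow> (nat \<Rightarrow> 'a) \<Rightarrow> (nat \<Rightarrow> 'a) \<Rightarrow> bool" where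
  "condN P t x y =
     ((\<forall>i<t. y i \<in> P) \<and> (\<forall>j. 1 \<le> j \<and> j \<le> t \<longrightarrow> x j \<in> P) \<and>
      (\<forall>i<t. x (Suc i) < y i) \<and>
      (\<forall>i. 1 \<le> i \<and> i < t \<longrightarrow> x i < y i) \<and>
      (\<forall>i j. i < t \<and> 1 \<le> j \<and> j \<le> t \<and> i + 2 \<le> j \<longrightarrow> \<not> (x j < y i)))"

definition q_reduced :: "'a::order set \<Rightarrow> int \<Rightarrow> nat \<Rightarrow> (nat \<Rightarrow> 'a) \<Rightarrow> (nat \<Rightarrow> 'a) \<Rightarrow> bool" where
  "q_reduced P \<epsilon> t x y =
     (\<forall>i j. i < j \<and> j \<le> t \<and> ext_less (xseq x i) (yseq t y j) \<longrightarrow>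
        qdist P \<epsilon> (xseq x i) (yseq t y j)
          < qseq P \<epsilon> (\<lambda>l. xseq x (i + l)) (\<lambda>l. yseq t y (i + l)) (j - i))"

definition is_chain_in :: "'a::order set \<Rightarrow> 'a set \<Rightarrow> bool" where
  "is_chain_in P C = (C \<subseteq> P \<and> (\<forall>a\<in>C. \<forall>b\<in>C. a \<le> b \<or> b \<le> a))"

definition maximal_chain :: "'a::order set \<Rightarrow> 'a set \<Rightarrow> bool" where
  "maximal_chain P C = (is_chain_in P C \<and> (\<forall>D. is_chain_in P D \<and> C \<subseteq> D \<longrightarrow> D = C))"

text \<open>\<xi> \<in> S^(m): \<xi> on P^- is given by d = \<xi>(-\<infinity>) and \<xi> restricted to P.\<close>
definition in_S :: "'a::order set \<Rightarrow> int \<Rightarrow> int \<Rightarrow> ('a \<Rightarrow> int) \<Rightarrow> bool" where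
  "in_S P m d \<xi> = ((\<forall>x\<in>P. \<xi> x \<ge> m) \<and>
     (\<forall>C. maximal_chain P C \<longrightarrow> d \<ge> sum \<xi> C + m))"

definition is_generator :: "'a::order set \<Rightarrow> int \<Rightarrow> int \<Rightarrow> ('a \<Rightarrow> int) \<Rightarrow> bool" where
  "is_generator P \<epsilon> d \<xi> = (in_S P \<epsilon> d \<xi> \<and>
     \<not> (\<exists>d1 \<xi>1 d2 \<xi>2. in_S P 0 d1 \<xi>1 \<and> d1 > 0 \<and> in_S P \<epsilon> d2 \<xi>2 \<and>
           d = d1 + d2 \<and> (\<forall>x\<in>P. \<xi> x = \<xi>1 x + \<xi>2 x)))"

end

theory Submission
  imports Defs
begin


lemma el_irrefl[simp]: "\<not> ext_less x x" by (cases x) auto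
lemma el_trans: "ext_less x y \<Longrightarrow> ext_less y z \<Longrightarrow> ext_less x z"
  by (cases x; cases y; cases z) auto
lemma el_asym: "ext_less x y \<Longrightarrow> \<not> ext_less y x"
  by (cases x; cases y) auto
lemma el_NegInf[simp]: "ext_less NegInf y \<longleftrightarrow> y \<noteq> NegInf" by (cases y) auto
lemma el_PosInf[simp]: "ext_less x PosInf \<longleftrightarrow> x \<noteq> PosInf" by (cases x) auto
lemma el_not_NegInf[simp]: "\<not> ext_less x NegInf" by (cases x) auto
lemma el_PosInf_not[simp]: "\<not> ext_less PosInf y" by (cases y) auto
lemma transp_el: "transp ext_less" by (auto simp: transp_def intro: el_trans)



lemma in_ext_simps[simp]: "in_ext P NegInf" "in_ext P PosInf" "in_ext P (Elem a) = (a \<in> P)"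
  by (auto simp: in_ext_def)

lemma E_eq: "{z. in_ext P z} = insert NegInf (insert PosInf (Elem ` P))"
  by (auto simp: in_ext_def split: ext.splits) (metis ext.exhaust image_eqI)

lemma finite_E: "finite P \<Longrightarrow> finite {z. in_ext P z}"
  by (simp add: E_eq)

lemma sc_Nil[simp]: "\<not> sat_chain P []" by (simp add: sat_chain_def)
lemma sc_single[simp]: "sat_chain P [z] \<longleftrightarrow> in_ext P z" by (simp add: sat_chain_def)

lemma all_nat_split: "(\<forall>i::nat. Q i) \<longleftrightarrow> Q 0 \<and> (\<forall>i. Q (Suc i))"
  by (metis not0_implies_Suc)

lemma sc_Cons2: "sat_chain P (a # b # zs) \<longleftrightarrow> covers_ext P a b \<and> sat_chain P (b # zs)"
proof -
  have "(\<forall>i. Suc i < length (a # b # zs) \<longrightarrow> covers_ext P ((a # b # zs) ! i) ((a # b # zs) ! Suc i))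
    \<longleftrightarrow> covers_ext P a b \<and> (\<forall>i. Suc i < length (b # zs) \<longrightarrow> covers_ext P ((b # zs) ! i) ((b # zs) ! Suc i))"
    by (subst all_nat_split) simp
  then show ?thesis unfolding sat_chain_def covers_ext_def by auto
qed

lemma sc_sorted: "sat_chain P zs \<Longrightarrow> sorted_wrt ext_less zs"
  unfolding sat_chain_def covers_ext_def by (simp add: sorted_wrt_iff_nth_Suc_transp[OF transp_el])

lemma sorted_distinct: "sorted_wrt ext_less zs \<Longrightarrow> distinct zs"
  by (induction zs) auto

lemma sc_in: "sat_chain P zs \<Longrightarrow> z \<in> set zs \<Longrightarrow> in_ext P z"
  by (simp add: sat_chain_def)

lemma sc_length: assumes "finite P" "sat_chain P zs" shows "length zs \<le> card {z. in_ext P z}"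
proof -
  have "distinct zs" using sorted_distinct[OF sc_sorted[OF assms(2)]] .
  then have "length zs = card (set zs)" by (simp add: distinct_card)
  also have "\<dots> \<le> card {z. in_ext P z}"
    by (rule card_mono[OF finite_E[OF assms(1)]]) (use sc_in[OF assms(2)] in auto)
  finally show ?thesis .
qed

lemma sc_append: "sat_chain P zs \<Longrightarrow> sat_chain P ws \<Longrightarrow> last zs = hd ws \<Longrightarrow> sat_chain P (zs @ tl ws)"
proof (induction zs rule: induct_list012)
  case 1 then show ?case by simp
next
  case (2 x) then show ?case by (cases ws) auto
next
  case (3 x y zs) then show ?case by (auto simp: sc_Cons2)
qed

lemma sorted_le: "sorted_wrt ext_less zs \<Longrightarrow> i \<le> j \<Longrightarrow> j < length zs \<Longrightarrow> zs!i = zs!j \<or> ext_less (zs!i) (zs!j)"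
  by (metis le_neq_implies_less sorted_wrt_nth_less)

lemma in_take_nth: "x \<in> set (take (Suc i) zs) \<Longrightarrow> \<exists>j\<le>i. j < length zs \<and> x = zs ! j"
  by (auto simp: in_set_conv_nth less_Suc_eq_le)
lemma in_drop_nth: "x \<in> set (drop (Suc i) zs) \<Longrightarrow> \<exists>j. Suc i + j < length zs \<and> x = zs ! (Suc i + j)"
  by (auto simp: in_set_conv_nth) (metis add_Suc less_diff_conv add.commute)

lemma sorted_ins: assumes "sorted_wrt ext_less zs" "Suc i < length zs" "ext_less (zs!i) z" "ext_less z (zs!Suc i)"
  shows "sorted_wrt ext_less (take (Suc i) zs @ z # drop (Suc i) zs)"
proof -
  have A: "ext_less a z" if a: "a \<in> set (take (Suc i) zs)" for a
  proof -
    obtain j where j: "j \<le> i" "a = zs ! j" using in_take_nth[OF a] by blast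
    have "zs ! j = zs ! i \<or> ext_less (zs!j) (zs!i)" using sorted_le[OF assms(1) j(1)] assms(2) by simp
    then show ?thesis using j(2) assms(3) el_trans by metis
  qed
  have B: "ext_less z b" if b: "b \<in> set (drop (Suc i) zs)" for b
  proof -
    obtain j where j: "Suc i + j < length zs" "b = zs ! (Suc i + j)" using in_drop_nth[OF b] by blast
    have "zs ! Suc i = zs ! (Suc i + j) \<or> ext_less (zs!Suc i) (zs!(Suc i + j))"
      using sorted_le[OF assms(1), of "Suc i" "Suc i + j"] j(1) by simp
    then show ?thesis using j(2) assms(4) el_trans by metis
  qed
  have s1: "sorted_wrt ext_less (take (Suc i) zs)" "sorted_wrt ext_less (drop (Suc i) zs)"
    using assms(1) by (simp_all add: sorted_wrt_take sorted_wrt_drop)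
  show ?thesis unfolding sorted_wrt_append sorted_wrt.simps(2)
  proof (intro conjI ballI)
    show "sorted_wrt ext_less (take (Suc i) zs)" "sorted_wrt ext_less (drop (Suc i) zs)" by (fact s1)+
    show "ext_less z y" if "y \<in> set (drop (Suc i) zs)" for y using B[OF that] .
    fix x y assume x: "x \<in> set (take (Suc i) zs)" and y: "y \<in> set (z # drop (Suc i) zs)"
    show "ext_less x y"
    proof (cases "y = z")
      case True then show ?thesis using A[OF x] by simp
    next
      case False then have "y \<in> set (drop (Suc i) zs)" using y by simp
      then show ?thesis using el_trans[OF A[OF x] B] by blast
    qed
  qed
qed

lemma ins_hd_last: assumes "Suc i < length zs"
  shows "hd (take (Suc i) zs @ z # drop (Suc i) zs) = hd zs"
    "last (take (Suc i) zs @ z # drop (Suc i) zs) = last zs"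
    "length (take (Suc i) zs @ z # drop (Suc i) zs) = Suc (length zs)"
    "set (take (Suc i) zs @ z # drop (Suc i) zs) = insert z (set zs)"
proof -
  show "hd (take (Suc i) zs @ z # drop (Suc i) zs) = hd zs" using assms by (cases zs) auto
  show "last (take (Suc i) zs @ z # drop (Suc i) zs) = last zs" using assms by (simp add: last_drop)
  show "length (take (Suc i) zs @ z # drop (Suc i) zs) = Suc (length zs)" using assms by simp
  show "set (take (Suc i) zs @ z # drop (Suc i) zs) = insert z (set zs)"
    by (metis Un_insert_right append_take_drop_id list.simps(15) set_append)
qed

lemma sc_exists: assumes "finite P" "in_ext P x" "in_ext P y" "ext_less x y"
  shows "\<exists>zs. sat_chain P zs \<and> hd zs = x \<and> last zs = y"
proof -
  let ?E = "{z. in_ext P z}"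
  define L where "L zs \<longleftrightarrow> sorted_wrt ext_less zs \<and> zs \<noteq> [] \<and> hd zs = x \<and> last zs = y \<and> set zs \<subseteq> ?E" for zs
  have L0: "L [x,y]" using assms by (auto simp: L_def)
  have Lb: "\<forall>zs. L zs \<longrightarrow> length zs < Suc (card ?E)"
  proof (intro allI impI)
    fix zs assume "L zs"
    then have "distinct zs" "set zs \<subseteq> ?E" by (auto simp: L_def intro: sorted_distinct)
    then have "length zs \<le> card ?E" using card_mono[OF finite_E[OF assms(1)]] by (metis distinct_card)
    then show "length zs < Suc (card ?E)" by simp
  qed
  obtain zs where zs: "L zs" "\<forall>ws. L ws \<longrightarrow> length ws \<le> length zs"
    using ex_has_greatest_nat[of L "[x,y]" length, OF L0 Lb] by blast
  have "sat_chain P zs"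
    unfolding sat_chain_def
  proof (intro conjI allI impI ballI)
    show "zs \<noteq> []" using zs(1) unfolding L_def by blast
    show "in_ext P z" if "z \<in> set zs" for z using zs(1) that unfolding L_def by blast
    fix i assume i: "Suc i < length zs"
    have lt: "ext_less (zs!i) (zs!Suc i)" using zs(1) i unfolding L_def by (simp add: sorted_wrt_nth_less)
    have inn: "in_ext P (zs!i)" "in_ext P (zs!Suc i)" using zs(1) i unfolding L_def by (meson Suc_lessD mem_Collect_eq nth_mem subsetD)+
    have "\<not> (\<exists>c. in_ext P c \<and> ext_less (zs!i) c \<and> ext_less c (zs!Suc i))"
    proof
      assume "\<exists>c. in_ext P c \<and> ext_less (zs!i) c \<and> ext_less c (zs!Suc i)"
      then obtain c where c: "in_ext P c" "ext_less (zs!i) c" "ext_less c (zs!Suc i)" by blast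
      let ?ws = "take (Suc i) zs @ c # drop (Suc i) zs"
      have Lz: "L zs" using zs(1) .
      have "set ?ws \<subseteq> ?E" using Lz c(1) ins_hd_last(4)[OF i, of c] unfolding L_def by auto
      moreover have "sorted_wrt ext_less ?ws" using Lz i c sorted_ins[of zs i c] unfolding L_def by blast
      ultimately have "L ?ws" using Lz ins_hd_last(1,2)[OF i, of c] unfolding L_def by simp
      then have "length ?ws \<le> length zs" using zs(2) by blast
      then show False using ins_hd_last[OF i, of c] by simp
    qed
    then show "covers_ext P (zs!i) (zs!Suc i)" using lt inn by (simp add: covers_ext_def)
  qed
  moreover have "hd zs = x \<and> last zs = y" using zs(1) unfolding L_def by blast
  ultimately show ?thesis by blast
qed



lemma sc_hd_last_less: assumes "sat_chain P zs" "2 \<le> length zs" shows "ext_less (hd zs) (last zs)"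
proof -
  have "zs \<noteq> []" using assms(2) by auto
  then have "hd zs = zs!0" "last zs = zs!(length zs - 1)" by (simp_all add: hd_conv_nth last_conv_nth)
  then show ?thesis using sorted_wrt_nth_less[OF sc_sorted[OF assms(1)], of 0 "length zs - 1"] assms(2) by simp
qed

lemma sc_len2: "sat_chain P zs \<Longrightarrow> hd zs \<noteq> last zs \<Longrightarrow> 2 \<le> length zs"
  by (cases zs; cases "tl zs") auto

lemma sc_same: "sat_chain P zs \<Longrightarrow> hd zs = last zs \<Longrightarrow> zs = [hd zs]"
proof -
  assume a: "sat_chain P zs" "hd zs = last zs"
  have "\<not> 2 \<le> length zs" using sc_hd_last_less[OF a(1)] a(2) by auto
  moreover have "zs \<noteq> []" using a(1) by (auto simp: sat_chain_def)
  ultimately show ?thesis by (cases zs; cases "tl zs") auto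
qed

lemma sc_drop: "sat_chain P zs \<Longrightarrow> i < length zs \<Longrightarrow> sat_chain P (drop i zs)"
  unfolding sat_chain_def by (auto dest: in_set_dropD)

lemma sc_take: "sat_chain P zs \<Longrightarrow> i < length zs \<Longrightarrow> sat_chain P (take (Suc i) zs)"
  unfolding sat_chain_def by (auto dest: in_set_takeD)

lemma fin_chains: assumes "finite P"
  shows "finite {zs. sat_chain P zs \<and> hd zs = x \<and> last zs = y}"
proof -
  have "{zs. sat_chain P zs \<and> hd zs = x \<and> last zs = y} \<subseteq> {zs. set zs \<subseteq> {z. in_ext P z} \<and> length zs \<le> card {z. in_ext P z}}"
    using sc_length[OF assms] sc_in by blast
  then show ?thesis using finite_lists_length_le[OF finite_E[OF assms]] finite_subset by blast
qed

lemma qdist_set: "{\<epsilon> * int t | t. \<exists>zs. sat_chain P zs \<and> length zs = Suc t \<and> hd zs = x \<and> last zs = y}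
   = (\<lambda>zs. \<epsilon> * int (length zs - 1)) ` {zs. sat_chain P zs \<and> hd zs = x \<and> last zs = y}"
proof (intro set_eqI iffI)
  fix v assume "v \<in> {\<epsilon> * int t | t. \<exists>zs. sat_chain P zs \<and> length zs = Suc t \<and> hd zs = x \<and> last zs = y}"
  then obtain t zs where "v = \<epsilon> * int t" "sat_chain P zs" "length zs = Suc t" "hd zs = x" "last zs = y" by blast
  then show "v \<in> (\<lambda>zs. \<epsilon> * int (length zs - 1)) ` {zs. sat_chain P zs \<and> hd zs = x \<and> last zs = y}"
    by (intro image_eqI[of _ _ zs]) auto
next
  fix v assume "v \<in> (\<lambda>zs. \<epsilon> * int (length zs - 1)) ` {zs. sat_chain P zs \<and> hd zs = x \<and> last zs = y}"
  then obtain zs where zs: "v = \<epsilon> * int (length zs - 1)" "sat_chain P zs" "hd zs = x" "last zs = y" by blast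
  then have "length zs = Suc (length zs - 1)" by (cases zs) auto
  then show "v \<in> {\<epsilon> * int t | t. \<exists>zs. sat_chain P zs \<and> length zs = Suc t \<and> hd zs = x \<and> last zs = y}"
    using zs by blast
qed

lemma qdist_ge: assumes "finite P" "sat_chain P zs" "hd zs = x" "last zs = y"
  shows "\<epsilon> * int (length zs - 1) \<le> qdist P \<epsilon> x y"
  unfolding qdist_def qdist_set
  by (rule Max_ge) (use fin_chains[OF assms(1)] assms in auto)

lemma qdist_obt: assumes "finite P" "in_ext P x" "in_ext P y" "ext_less x y"
  shows "\<exists>zs. sat_chain P zs \<and> hd zs = x \<and> last zs = y \<and> qdist P \<epsilon> x y = \<epsilon> * int (length zs - 1)"
proof -
  have ne: "{zs. sat_chain P zs \<and> hd zs = x \<and> last zs = y} \<noteq> {}" using sc_exists[OF assms] by blast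
  have "qdist P \<epsilon> x y \<in> (\<lambda>zs. \<epsilon> * int (length zs - 1)) ` {zs. sat_chain P zs \<and> hd zs = x \<and> last zs = y}"
    unfolding qdist_def qdist_set by (rule Max_in) (use fin_chains[OF assms(1)] ne in auto)
  then show ?thesis by auto
qed

lemma cover_chain: assumes "covers_ext P x y" "sat_chain P zs" "hd zs = x" "last zs = y"
  shows "zs = [x, y]"
proof -
  have xy: "ext_less x y" using assms(1) by (simp add: covers_ext_def)
  then have l2: "2 \<le> length zs" using sc_len2[OF assms(2)] assms(3,4) el_irrefl by metis
  have "\<not> 3 \<le> length zs"
  proof
    assume l3: "3 \<le> length zs"
    have s: "sorted_wrt ext_less zs" using sc_sorted[OF assms(2)] .
    have "ext_less (zs!0) (zs!1)" "ext_less (zs!1) (zs!(length zs - 1))"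
      using sorted_wrt_nth_less[OF s] l3 by auto
    moreover have "zs \<noteq> []" using l3 by auto
    then have "zs!0 = x" "zs!(length zs - 1) = y" using assms(3,4)
      by (simp_all add: hd_conv_nth last_conv_nth)
    moreover have "in_ext P (zs!1)" using sc_in[OF assms(2)] l3 by auto
    ultimately show False using assms(1) by (auto simp: covers_ext_def)
  qed
  then have "length zs = 2" using l2 by simp
  then show ?thesis using assms(3,4)
    by (cases zs; cases "tl zs") auto
qed

lemma qdist_cover: assumes "finite P" "covers_ext P x y" shows "qdist P \<epsilon> x y = \<epsilon>"
proof -
  have "{zs. sat_chain P zs \<and> hd zs = x \<and> last zs = y} = {[x,y]}"
    using cover_chain[OF assms(2)] assms(2) by (auto simp: sc_Cons2 covers_ext_def)
  then show ?thesis unfolding qdist_def qdist_set by simp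
qed

lemma qdist_super: assumes "finite P" "in_ext P x" "in_ext P a" "in_ext P y" "ext_less x a" "ext_less a y"
  shows "qdist P \<epsilon> x a + qdist P \<epsilon> a y \<le> qdist P \<epsilon> x y"
proof -
  obtain zs where zs: "sat_chain P zs" "hd zs = x" "last zs = a" "qdist P \<epsilon> x a = \<epsilon> * int (length zs - 1)"
    using qdist_obt[OF assms(1,2,3,5)] by blast
  obtain ws where ws: "sat_chain P ws" "hd ws = a" "last ws = y" "qdist P \<epsilon> a y = \<epsilon> * int (length ws - 1)"
    using qdist_obt[OF assms(1,3,4,6)] by blast
  have c: "sat_chain P (zs @ tl ws)" using sc_append[OF zs(1) ws(1)] zs ws by simp
  have l: "2 \<le> length zs" "2 \<le> length ws"
    using sc_len2[OF zs(1)] sc_len2[OF ws(1)] zs(2,3) ws(2,3) assms(5,6) el_irrefl by metis+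
  have "hd (zs @ tl ws) = x" using zs l by (cases zs) auto
  moreover have "last (zs @ tl ws) = y" using ws l by (cases ws) auto
  ultimately have "\<epsilon> * int (length (zs @ tl ws) - 1) \<le> qdist P \<epsilon> x y" using qdist_ge[OF assms(1) c] by blast
  moreover have "int (length (zs @ tl ws) - 1) = int (length zs - 1) + int (length ws - 1)" using l by simp
  ultimately show ?thesis using zs(4) ws(4) by (simp add: distrib_left)
qed



locale ctx =
  fixes P :: "'a::order set" and eps :: int and xi :: "'a \<Rightarrow> int"
  assumes finP: "finite P" and xi_ge: "\<And>a. a \<in> P \<Longrightarrow> eps \<le> xi a"
begin

definition xe :: "'a ext \<Rightarrow> int" where "xe z = (case z of Elem a \<Rightarrow> xi a | PosInf \<Rightarrow> eps | NegInf \<Rightarrow> 0)"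
definition wt :: "'a ext list \<Rightarrow> int" where "wt zs = sum_list (map xe (tl zs))"
definition hv :: "'a ext \<Rightarrow> int" where "hv v = Max (wt ` {zs. sat_chain P zs \<and> hd zs = NegInf \<and> last zs = v})"
definition et :: "'a ext \<Rightarrow> int" where "et z = xe z - eps"
definition good :: "'a ext \<Rightarrow> 'a ext \<Rightarrow> bool" where
  "good x y \<longleftrightarrow> in_ext P x \<and> in_ext P y \<and> ext_less x y \<and> hv y - hv x - et y \<le> qdist P eps x y"

lemma xe_simps[simp]: "xe (Elem a) = xi a" "xe PosInf = eps" "xe NegInf = 0"
  by (simp_all add: xe_def)

lemma et_PosInf[simp]: "et PosInf = 0" by (simp add: et_def)

lemma hv_ge: "sat_chain P zs \<Longrightarrow> hd zs = NegInf \<Longrightarrow> last zs = v \<Longrightarrow> wt zs \<le> hv v"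
  unfolding hv_def by (rule Max_ge) (use fin_chains[OF finP] in auto)

lemma hv_obt: assumes "in_ext P v"
  shows "\<exists>zs. sat_chain P zs \<and> hd zs = NegInf \<and> last zs = v \<and> hv v = wt zs"
proof -
  have "\<exists>zs. sat_chain P zs \<and> hd zs = NegInf \<and> last zs = v"
  proof (cases "v = NegInf")
    case True then show ?thesis by (intro exI[of _ "[NegInf]"]) simp
  next
    case False then show ?thesis using sc_exists[OF finP _ assms] by simp
  qed
  then have ne: "{zs. sat_chain P zs \<and> hd zs = NegInf \<and> last zs = v} \<noteq> {}" by blast
  have "hv v \<in> wt ` {zs. sat_chain P zs \<and> hd zs = NegInf \<and> last zs = v}"
    unfolding hv_def by (rule Max_in) (use fin_chains[OF finP] ne in auto)
  then show ?thesis by auto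
qed

lemma hv_NegInf: "hv NegInf = 0"
proof -
  have "{zs. sat_chain P zs \<and> hd zs = NegInf \<and> last zs = NegInf} = {[NegInf]}"
    using sc_same by fastforce
  then show ?thesis by (simp add: hv_def wt_def)
qed

lemma wt_app: "zs \<noteq> [] \<Longrightarrow> wt (zs @ tl ws) = wt zs + wt ws"
  by (cases zs) (simp_all add: wt_def)

lemma hv_step: assumes "sat_chain P ws" shows "hv (hd ws) + wt ws \<le> hv (last ws)"
proof -
  have ws: "ws \<noteq> []" using assms by (auto simp: sat_chain_def)
  have "in_ext P (hd ws)" using sc_in[OF assms] ws by simp
  then obtain zs where zs: "sat_chain P zs" "hd zs = NegInf" "last zs = hd ws" "hv (hd ws) = wt zs"
    using hv_obt by blast
  have zn: "zs \<noteq> []" using zs(1) by (auto simp: sat_chain_def)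
  have c: "sat_chain P (zs @ tl ws)" using sc_append[OF zs(1) assms] zs(3) by simp
  have "hd (zs @ tl ws) = NegInf" using zs(2) zn by simp
  moreover have "last (zs @ tl ws) = last ws" using zs(3) ws by (cases ws) auto
  ultimately have "wt (zs @ tl ws) \<le> hv (last ws)" using hv_ge[OF c] by blast
  then show ?thesis using wt_app[OF zn, of ws] zs(4) by simp
qed

lemma xe_ge: "in_ext P z \<Longrightarrow> z \<noteq> NegInf \<Longrightarrow> eps \<le> xe z"
  by (cases z) (auto intro: xi_ge)

lemma sum_ge: "(\<forall>z\<in>set l. eps \<le> xe z) \<Longrightarrow> eps * int (length l) \<le> sum_list (map xe l)"
  by (induction l) (auto simp: distrib_left)

lemma wt_low: assumes "sat_chain P ws" "2 \<le> length ws"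
  shows "eps * int (length ws - 1) + et (last ws) \<le> wt ws"
proof -
  obtain w ws' where ws: "ws = w # ws'" "ws' \<noteq> []" using assms(2) by (cases ws; cases "tl ws") auto
  have s: "sorted_wrt ext_less (w # ws')" using sc_sorted[OF assms(1)] ws by simp
  have ge: "\<forall>z\<in>set ws'. eps \<le> xe z"
  proof
    fix z assume z: "z \<in> set ws'"
    then have "ext_less w z" using s by simp
    then have "z \<noteq> NegInf" by auto
    moreover have "in_ext P z" using sc_in[OF assms(1)] z ws by simp
    ultimately show "eps \<le> xe z" using xe_ge by blast
  qed
  have ws'eq: "ws' = butlast ws' @ [last ws']" using ws(2) by simp
  have "sum_list (map xe ws') = sum_list (map xe (butlast ws')) + xe (last ws')"
    by (subst ws'eq) simp
  moreover have "eps * int (length (butlast ws')) \<le> sum_list (map xe (butlast ws'))"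
    using ge by (intro sum_ge) (auto dest: in_set_butlastD)
  moreover have "last ws = last ws'" "length ws - 1 = Suc (length (butlast ws'))" using ws by auto
  ultimately show ?thesis unfolding wt_def et_def using ws(1) by (simp add: algebra_simps)
qed

lemma down: assumes "in_ext P x" "in_ext P y" "ext_less x y"
  shows "qdist P eps x y + et y \<le> hv y - hv x"
proof -
  obtain ws where ws: "sat_chain P ws" "hd ws = x" "last ws = y" "qdist P eps x y = eps * int (length ws - 1)"
    using qdist_obt[OF finP assms] by blast
  have "2 \<le> length ws" using sc_len2[OF ws(1)] ws(2,3) assms(3) el_irrefl by metis
  then have "eps * int (length ws - 1) + et y \<le> wt ws" using wt_low[OF ws(1)] ws(3) by simp
  moreover have "hv x + wt ws \<le> hv y" using hv_step[OF ws(1)] ws(2,3) by simp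
  ultimately show ?thesis using ws(4) by simp
qed

end


fun unel :: "'a ext \<Rightarrow> 'a" where "unel (Elem a) = a" | "unel _ = undefined"

lemma qseq_0: "qseq P e w z 0 = qdist P e (w 0) (z 0)"
  by (simp add: qseq_def)

lemma qseq_Suc: "qseq P e w z (Suc s) = qseq P e w z s + qdist P e (w (Suc s)) (z (Suc s)) - qdist P e (w (Suc s)) (z s)"
  by (simp add: qseq_def)

lemma qseq_cong: "(\<And>l. l \<le> s \<Longrightarrow> w l = w' l \<and> z l = z' l) \<Longrightarrow> qseq P e w z s = qseq P e w' z' s"
  unfolding qseq_def by (intro arg_cong2[where f="(-)"] sum.cong) auto

context ctx begin

definition apath :: "nat \<Rightarrow> (nat \<Rightarrow> 'a ext) \<Rightarrow> (nat \<Rightarrow> 'a ext) \<Rightarrow> bool" where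
  "apath t X Y \<longleftrightarrow> Y t = PosInf \<and> (\<forall>l\<le>t. good (X l) (Y l)) \<and> (\<forall>l<t. ext_less (X (Suc l)) (Y l))"

definition Xs where "Xs = {x. \<exists>t X Y. apath t X Y \<and> X 0 = x}"

lemma Xs_base: "good x PosInf \<Longrightarrow> x \<in> Xs"
  unfolding Xs_def apath_def by (intro CollectI exI[of _ 0] exI[of _ "\<lambda>_. x"] exI[of _ "\<lambda>_. PosInf"]) simp

lemma Xs_step: assumes "good x y" "x' \<in> Xs" "ext_less x' y" shows "x \<in> Xs"
proof -
  obtain t X Y where p: "apath t X Y" "X 0 = x'" using assms(2) by (auto simp: Xs_def)
  have "apath (Suc t) (case_nat x X) (case_nat y Y)"
    unfolding apath_def
  proof (intro conjI allI impI)
    show "case_nat y Y (Suc t) = PosInf" using p by (simp add: apath_def)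
    fix l
    show "l \<le> Suc t \<Longrightarrow> good (case_nat x X l) (case_nat y Y l)"
      using p assms(1) by (cases l) (auto simp: apath_def)
    show "l < Suc t \<Longrightarrow> ext_less (case_nat x X (Suc l)) (case_nat y Y l)"
      using p assms(3) by (cases l) (auto simp: apath_def)
  qed
  then show ?thesis unfolding Xs_def by (intro CollectI exI[of _ "Suc t"]) auto
qed

lemma Xs_elim: assumes "x \<in> Xs" shows "\<exists>y. good x y \<and> (y = PosInf \<or> (\<exists>x'\<in>Xs. ext_less x' y))"
proof -
  obtain t X Y where p: "apath t X Y" "X 0 = x" using assms by (auto simp: Xs_def)
  show ?thesis
  proof (cases t)
    case 0 then show ?thesis using p by (intro exI[of _ "Y 0"]) (auto simp: apath_def)
  next
    case (Suc t')
    have "apath t' (\<lambda>l. X (Suc l)) (\<lambda>l. Y (Suc l))" using p Suc by (auto simp: apath_def)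
    then have "X (Suc 0) \<in> Xs" unfolding Xs_def by blast
    moreover have "ext_less (X (Suc 0)) (Y 0)" "good x (Y 0)" using p Suc by (auto simp: apath_def)
    ultimately show ?thesis by blast
  qed
qed

lemma tele: "(\<forall>l\<le>s. good (w l) (z l)) \<Longrightarrow> (\<forall>l<s. ext_less (w (Suc l)) (z l))
   \<Longrightarrow> hv (z s) - hv (w 0) - et (z s) \<le> qseq P eps w z s"
proof (induction s)
  case 0 then show ?case by (simp add: qseq_0 good_def)
next
  case (Suc s)
  have IH: "hv (z s) - hv (w 0) - et (z s) \<le> qseq P eps w z s" using Suc by auto
  have g: "good (w (Suc s)) (z (Suc s))" "good (w s) (z s)" using Suc.prems by auto
  have l: "ext_less (w (Suc s)) (z s)" using Suc.prems by auto
  have d: "qdist P eps (w (Suc s)) (z s) + et (z s) \<le> hv (z s) - hv (w (Suc s))"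
    using down[OF _ _ l] g by (auto simp: good_def)
  show ?case unfolding qseq_Suc using IH g(1) d by (simp add: good_def)
qed

end


context ctx begin

lemma min_path: assumes "NegInf \<in> Xs"
  shows "\<exists>t x y. condN P t x y \<and> q_reduced P eps t x y \<and> hv PosInf \<le> qseq P eps (xseq x) (yseq t y) t"
proof -
  define Q where "Q t \<longleftrightarrow> (\<exists>X Y. apath t X Y \<and> X 0 = NegInf)" for t
  have ex: "\<exists>t. Q t" using assms by (auto simp: Xs_def Q_def)
  define T where "T = (LEAST t. Q t)"
  have QT: "Q T" using LeastI_ex[OF ex] T_def by simp
  have minT: "\<not> Q t" if "t < T" for t using not_less_Least[of t Q] that T_def by simp
  obtain X Y where p: "apath T X Y" "X 0 = NegInf" using QT Q_def by blast
  have gd: "good (X l) (Y l)" if "l \<le> T" for l using p that by (simp add: apath_def)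
  have lt: "ext_less (X (Suc l)) (Y l)" if "l < T" for l using p that by (simp add: apath_def)
  have YT: "Y T = PosInf" using p by (simp add: apath_def)
  have Xne: "X l \<noteq> NegInf" if "1 \<le> l" "l \<le> T" for l
  proof
    assume a: "X l = NegInf"
    have "apath (T - l) (\<lambda>k. X (l + k)) (\<lambda>k. Y (l + k))"
      unfolding apath_def using p that
      by (auto simp: apath_def)
    then have "Q (T - l)" using a unfolding Q_def by (intro exI[of _ "\<lambda>k. X (l + k)"] exI[of _ "\<lambda>k. Y (l + k)"]) auto
    moreover have "T - l < T" using that by simp
    ultimately show False using minT by blast
  qed
  have Ync: "Y l \<noteq> PosInf" if "l < T" for l
  proof
    assume a: "Y l = PosInf"
    have "apath l X Y" unfolding apath_def using p that a by (auto simp: apath_def)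
    then show False using minT[OF that] p(2) unfolding Q_def by blast
  qed
  have Xelem: "\<exists>a. X l = Elem a" if "1 \<le> l" "l \<le> T" for l
  proof -
    have "X l \<noteq> PosInf" using gd[OF that(2)] by (auto simp: good_def)
    then show ?thesis using Xne[OF that] by (cases "X l") auto
  qed
  have Yelem: "\<exists>a. Y l = Elem a" if "l < T" for l
  proof -
    have "Y l \<noteq> NegInf" using gd[of l] that by (auto simp: good_def)
    then show ?thesis using Ync[OF that] by (cases "Y l") auto
  qed
  define x where "x l = unel (X l)" for l
  define y where "y l = unel (Y l)" for l
  have xs: "xseq x l = X l" if lT: "l \<le> T" for l
  proof (cases "l = 0")
    case True then show ?thesis using p(2) by (simp add: xseq_def)
  next
    case False then obtain a where "X l = Elem a" using Xelem[of l] lT by fastforce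
    then show ?thesis using False by (simp add: xseq_def x_def)
  qed
  have ys: "yseq T y l = Y l" if lT: "l \<le> T" for l
  proof (cases "l = T")
    case True then show ?thesis using YT by (simp add: yseq_def)
  next
    case False then obtain a where "Y l = Elem a" using Yelem[of l] lT by fastforce
    then show ?thesis using False by (simp add: yseq_def y_def)
  qed
  have noncomp: "\<not> ext_less (X j) (Y i)" if "i < T" "j \<le> T" "i + 2 \<le> j" for i j
  proof
    assume a: "ext_less (X j) (Y i)"
    define k where "k = j - i - 1"
    define X' where "X' l = (if l \<le> i then X l else X (l + k))" for l
    define Y' where "Y' l = (if l \<le> i then Y l else Y (l + k))" for l
    have "apath (T - k) X' Y'"
      unfolding apath_def
    proof (intro conjI allI impI)
      have "\<not> (T - k \<le> i)" "T - k + k = T" using that by (auto simp: k_def)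
      then show "Y' (T - k) = PosInf" using YT by (simp add: Y'_def)
      fix l
      show "l \<le> T - k \<Longrightarrow> good (X' l) (Y' l)" using gd that by (auto simp: X'_def Y'_def k_def)
      show "l < T - k \<Longrightarrow> ext_less (X' (Suc l)) (Y' l)"
      proof -
        assume l: "l < T - k"
        consider "l < i" | "l = i" | "l > i" by linarith
        then show ?thesis
        proof cases
          case 1 then show ?thesis using lt[of l] that by (simp add: X'_def Y'_def)
        next
          case 2 then show ?thesis using a that by (simp add: X'_def Y'_def k_def)
        next
          case 3 then show ?thesis using lt[of "l + k"] l that by (simp add: X'_def Y'_def k_def)
        qed
      qed
    qed
    then have "Q (T - k)" using p(2) unfolding Q_def by (intro exI[of _ X'] exI[of _ Y']) (simp add: X'_def)
    moreover have "T - k < T" using that unfolding k_def by linarith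
    ultimately show False using minT by blast
  qed
  have red: "qdist P eps (X i) (Y j) < qseq P eps (\<lambda>l. X (i + l)) (\<lambda>l. Y (i + l)) (j - i)"
    if ij: "i < j" "j \<le> T" "ext_less (X i) (Y j)" for i j
  proof (rule ccontr)
    assume "\<not> ?thesis"
    then have c: "qseq P eps (\<lambda>l. X (i + l)) (\<lambda>l. Y (i + l)) (j - i) \<le> qdist P eps (X i) (Y j)" by simp
    have "hv (Y (i + (j - i))) - hv (X (i + 0)) - et (Y (i + (j - i))) \<le> qseq P eps (\<lambda>l. X (i + l)) (\<lambda>l. Y (i + l)) (j - i)"
      by (rule tele) (use gd lt ij in auto)
    then have "hv (Y j) - hv (X i) - et (Y j) \<le> qdist P eps (X i) (Y j)" using c ij by simp
    then have g: "good (X i) (Y j)" using gd[of i] gd[of j] ij by (auto simp: good_def)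
    define k where "k = j - i"
    define X' where "X' l = (if l \<le> i then X l else X (l + k))" for l
    define Y' where "Y' l = (if l < i then Y l else Y (l + k))" for l
    have "apath (T - k) X' Y'"
      unfolding apath_def
    proof (intro conjI allI impI)
      have "\<not> (T - k < i)" "T - k + k = T" using ij by (auto simp: k_def)
      then show "Y' (T - k) = PosInf" using YT by (simp add: Y'_def)
      fix l
      show "l \<le> T - k \<Longrightarrow> good (X' l) (Y' l)"
      proof -
        assume l: "l \<le> T - k"
        consider "l < i" | "l = i" | "l > i" by linarith
        then show ?thesis
        proof cases
          case 1 then show ?thesis using gd[of l] ij by (simp add: X'_def Y'_def)
        next
          case 2 then show ?thesis using g ij by (simp add: X'_def Y'_def k_def)
        next
          case 3 then show ?thesis using gd[of "l + k"] l ij by (simp add: X'_def Y'_def k_def)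
        qed
      qed
      show "l < T - k \<Longrightarrow> ext_less (X' (Suc l)) (Y' l)"
      proof -
        assume l: "l < T - k"
        consider "l < i" | "l \<ge> i" by linarith
        then show ?thesis
        proof cases
          case 1 then show ?thesis using lt[of l] ij by (simp add: X'_def Y'_def)
        next
          case 2 then show ?thesis using lt[of "l + k"] l ij by (simp add: X'_def Y'_def k_def)
        qed
      qed
    qed
    then have "Q (T - k)" using p(2) unfolding Q_def by (intro exI[of _ X'] exI[of _ Y']) (simp add: X'_def)
    moreover have "T - k < T" using ij unfolding k_def by linarith
    ultimately show False using minT by blast
  qed
  have cN: "condN P T x y"
    unfolding condN_def
  proof (intro conjI allI impI)
    fix i assume i: "i < T"
    obtain a where a: "Y i = Elem a" using Yelem[OF i] by blast
    show "y i \<in> P" using gd[of i] i a by (simp add: y_def good_def)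
  next
    fix j assume j: "1 \<le> j \<and> j \<le> T"
    obtain a where a: "X j = Elem a" using Xelem j by blast
    show "x j \<in> P" using gd[of j] j a by (simp add: x_def good_def)
  next
    fix i assume i: "i < T"
    obtain a where a: "Y i = Elem a" using Yelem[OF i] by blast
    obtain b where b: "X (Suc i) = Elem b" using Xelem[of "Suc i"] i by auto
    show "x (Suc i) < y i" using lt[OF i] a b by (simp add: x_def y_def)
  next
    fix i assume i: "1 \<le> i \<and> i < T"
    obtain a where a: "Y i = Elem a" using Yelem i by blast
    obtain b where b: "X i = Elem b" using Xelem[of i] i by auto
    show "x i < y i" using gd[of i] i a b by (simp add: x_def y_def good_def)
  next
    fix i j assume ij: "i < T \<and> 1 \<le> j \<and> j \<le> T \<and> i + 2 \<le> j"
    obtain a where a: "Y i = Elem a" using Yelem ij by blast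
    obtain b where b: "X j = Elem b" using Xelem[of j] ij by auto
    show "\<not> x j < y i" using noncomp[of i j] ij a b by (simp add: x_def y_def)
  qed
  have qR: "q_reduced P eps T x y"
    unfolding q_reduced_def
  proof (intro allI impI)
    fix i j assume ij: "i < j \<and> j \<le> T \<and> ext_less (xseq x i) (yseq T y j)"
    have e: "qseq P eps (\<lambda>l. xseq x (i + l)) (\<lambda>l. yseq T y (i + l)) (j - i)
        = qseq P eps (\<lambda>l. X (i + l)) (\<lambda>l. Y (i + l)) (j - i)"
      by (rule qseq_cong) (use xs ys ij in auto)
    show "qdist P eps (xseq x i) (yseq T y j) < qseq P eps (\<lambda>l. xseq x (i + l)) (\<lambda>l. yseq T y (i + l)) (j - i)"
      unfolding e using red[of i j] ij xs[of i] ys[of j] by simp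
  qed
  have "qseq P eps (xseq x) (yseq T y) T = qseq P eps X Y T"
    by (rule qseq_cong) (use xs ys in auto)
  moreover have "hv (Y T) - hv (X 0) - et (Y T) \<le> qseq P eps X Y T"
    by (rule tele) (use gd lt in auto)
  ultimately have "hv PosInf \<le> qseq P eps (xseq x) (yseq T y) T"
    using YT p(2) hv_NegInf by simp
  then show ?thesis using cN qR by blast
qed

end


lemma sorted_total: "sorted_wrt ext_less zs \<Longrightarrow> u \<in> set zs \<Longrightarrow> v \<in> set zs \<Longrightarrow> u = v \<or> ext_less u v \<or> ext_less v u"
  by (induction zs) auto

lemma split_point: "zs \<noteq> [] \<Longrightarrow> ext_less (hd zs) z \<Longrightarrow> \<not> ext_less (last zs) z
  \<Longrightarrow> \<exists>i. Suc i < length zs \<and> ext_less (zs!i) z \<and> \<not> ext_less (zs!Suc i) z"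
proof (induction zs)
  case Nil then show ?case by simp
next
  case (Cons a rest)
  show ?case
  proof (cases "rest = []")
    case True then show ?thesis using Cons by simp
  next
    case False
    show ?thesis
    proof (cases "ext_less (hd rest) z")
      case True
      then obtain i where "Suc i < length rest" "ext_less (rest!i) z" "\<not> ext_less (rest!Suc i) z"
        using Cons False by auto
      then show ?thesis by (intro exI[of _ "Suc i"]) auto
    next
      case f: False
      then show ?thesis using Cons False by (intro exI[of _ 0]) (auto simp: hd_conv_nth)
    qed
  qed
qed

lemma sc_shape: assumes "sat_chain P zs" "hd zs = NegInf" "last zs = PosInf"
  shows "\<exists>mid. zs = NegInf # mid @ [PosInf]"
proof -
  have "2 \<le> length zs" using sc_len2[OF assms(1)] assms(2,3) by simp
  then obtain a rest where zs: "zs = a # rest" "rest \<noteq> []" by (cases zs; cases "tl zs") auto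
  then have r: "rest = butlast rest @ [last rest]" by simp
  have "last rest = PosInf" "a = NegInf" using zs assms(2,3) by auto
  then have "zs = NegInf # butlast rest @ [PosInf]" using zs(1) r by simp
  then show ?thesis by blast
qed

lemma M1_chain: assumes "finite P" "sat_chain P zs" "hd zs = NegInf" "last zs = PosInf"
  shows "maximal_chain P {a. Elem a \<in> set zs}"
proof -
  let ?C = "{a. Elem a \<in> set zs}"
  have s: "sorted_wrt ext_less zs" using sc_sorted[OF assms(2)] .
  have ne: "zs \<noteq> []" using assms(2) by (auto simp: sat_chain_def)
  have sub: "?C \<subseteq> P" using sc_in[OF assms(2)] by fastforce
  have ch: "is_chain_in P ?C"
    unfolding is_chain_in_def
  proof (intro conjI ballI sub)
    fix a b assume "a \<in> ?C" "b \<in> ?C"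
    then have "Elem a = Elem b \<or> ext_less (Elem a) (Elem b) \<or> ext_less (Elem b) (Elem a)"
      using sorted_total[OF s] by blast
    then show "a \<le> b \<or> b \<le> a" by auto
  qed
  show ?thesis unfolding maximal_chain_def
  proof (intro conjI allI impI ch)
    fix D assume D: "is_chain_in P D \<and> ?C \<subseteq> D"
    show "D = ?C"
    proof (rule ccontr)
      assume "D \<noteq> ?C"
      then obtain e where e: "e \<in> D" "e \<notin> ?C" using D by blast
      have eP: "e \<in> P" using D e unfolding is_chain_in_def by blast
      obtain i where i: "Suc i < length zs" "ext_less (zs!i) (Elem e)" "\<not> ext_less (zs!Suc i) (Elem e)"
        using split_point[OF ne, of "Elem e"] assms(3,4) by auto
      have lti: "ext_less (zs!i) (zs!Suc i)" using sorted_wrt_nth_less[OF s] i(1) by simp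
      have mem: "zs!Suc i \<in> set zs" using i(1) by simp
      have "ext_less (Elem e) (zs!Suc i)"
      proof (cases "zs!Suc i")
        case NegInf then show ?thesis using lti by simp
      next
        case PosInf then show ?thesis by simp
      next
        case (Elem c)
        then have "c \<in> ?C" using mem by simp
        then have "c \<in> D" "c \<noteq> e" using D e by auto
        then have "c \<le> e \<or> e \<le> c" using D e(1) unfolding is_chain_in_def by blast
        then show ?thesis using i(3) Elem \<open>c \<noteq> e\<close> by (auto simp: order.order_iff_strict)
      qed
      moreover have "covers_ext P (zs!i) (zs!Suc i)" using assms(2) i(1) by (simp add: sat_chain_def)
      ultimately show False using i(2) eP by (auto simp: covers_ext_def)
    qed
  qed
qed

lemma M2: assumes "finite P" "maximal_chain P C"
  shows "\<exists>zs. sat_chain P zs \<and> hd zs = NegInf \<and> last zs = PosInf \<and> {a. Elem a \<in> set zs} = C"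
proof -
  let ?A = "insert NegInf (insert PosInf (Elem ` C))"
  have CP: "C \<subseteq> P" and Cch: "\<forall>a\<in>C. \<forall>b\<in>C. a \<le> b \<or> b \<le> a"
    using assms(2) by (auto simp: maximal_chain_def is_chain_in_def)
  have finA: "finite ?A" using finite_subset[OF CP assms(1)] by simp
  define L where "L zs \<longleftrightarrow> sorted_wrt ext_less zs \<and> zs \<noteq> [] \<and> hd zs = NegInf \<and> last zs = PosInf \<and> set zs \<subseteq> ?A" for zs
  have L0: "L [NegInf, PosInf]" by (simp add: L_def)
  have Lb: "\<forall>zs. L zs \<longrightarrow> length zs < Suc (card ?A)"
  proof (intro allI impI)
    fix zs assume a: "L zs"
    then have "distinct zs" "set zs \<subseteq> ?A" unfolding L_def using sorted_distinct by blast+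
    then have "length zs \<le> card ?A" using card_mono[OF finA] by (metis distinct_card)
    then show "length zs < Suc (card ?A)" by simp
  qed
  obtain zs where zs: "L zs" "\<forall>ws. L ws \<longrightarrow> length ws \<le> length zs"
    using ex_has_greatest_nat[of L "[NegInf, PosInf]" length, OF L0 Lb] by blast
  have s: "sorted_wrt ext_less zs" and ne: "zs \<noteq> []" and hdz: "hd zs = NegInf" and lz: "last zs = PosInf"
    and sA: "set zs \<subseteq> ?A" using zs(1) unfolding L_def by blast+
  have noins: False if i: "Suc i < length zs" "ext_less (zs!i) (Elem c)" "ext_less (Elem c) (zs!Suc i)" "c \<in> C" for i c
  proof -
    let ?ws = "take (Suc i) zs @ Elem c # drop (Suc i) zs"
    have "set ?ws \<subseteq> ?A" using sA i(4) ins_hd_last(4)[OF i(1), of "Elem c"] by auto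
    moreover have "sorted_wrt ext_less ?ws" using sorted_ins[OF s i(1-3)] .
    ultimately have "L ?ws" using ins_hd_last(1,2)[OF i(1), of "Elem c"] hdz lz ne unfolding L_def by simp
    then have "length ?ws \<le> length zs" using zs(2) by blast
    then show False using ins_hd_last(3)[OF i(1), of "Elem c"] by simp
  qed
  have allC: "Elem c \<in> set zs" if c: "c \<in> C" for c
  proof (rule ccontr)
    assume nin: "Elem c \<notin> set zs"
    obtain i where i: "Suc i < length zs" "ext_less (zs!i) (Elem c)" "\<not> ext_less (zs!Suc i) (Elem c)"
      using split_point[OF ne, of "Elem c"] hdz lz by auto
    have lti: "ext_less (zs!i) (zs!Suc i)" using sorted_wrt_nth_less[OF s] i(1) by simp
    have mem: "zs!Suc i \<in> set zs" using i(1) by simp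
    have "ext_less (Elem c) (zs!Suc i)"
    proof (cases "zs!Suc i")
      case NegInf then show ?thesis using lti by simp
    next
      case PosInf then show ?thesis by simp
    next
      case (Elem b)
      then have "b \<in> C" "b \<noteq> c" using mem sA nin by auto
      then have "b \<le> c \<or> c \<le> b" using Cch c by blast
      then show ?thesis using i(3) Elem \<open>b \<noteq> c\<close> by (auto simp: order.order_iff_strict)
    qed
    then show False using noins[OF i(1,2) _ c] by blast
  qed
  have inA: "in_ext P z" if "z \<in> set zs" for z
  proof -
    have "z \<in> ?A" using that sA by blast
    then show ?thesis using CP by (cases z) auto
  qed
  have sat: "sat_chain P zs"
    unfolding sat_chain_def
  proof (intro conjI allI impI ballI ne)
    show "in_ext P z" if "z \<in> set zs" for z using inA that .
    fix i assume i: "Suc i < length zs"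
    have lti: "ext_less (zs!i) (zs!Suc i)" using sorted_wrt_nth_less[OF s] i by simp
    have inn: "in_ext P (zs!i)" "in_ext P (zs!Suc i)"
      using i inA by auto
    have "\<not> (\<exists>z. in_ext P z \<and> ext_less (zs!i) z \<and> ext_less z (zs!Suc i))"
    proof
      assume "\<exists>z. in_ext P z \<and> ext_less (zs!i) z \<and> ext_less z (zs!Suc i)"
      then obtain z where z: "in_ext P z" "ext_less (zs!i) z" "ext_less z (zs!Suc i)" by blast
      obtain e where e: "z = Elem e" using z by (cases z) auto
      have eP: "e \<in> P" using z(1) e by simp
      show False
      proof (cases "e \<in> C")
        case True then show False using noins[OF i] z e by blast
      next
        case False
        have "is_chain_in P (insert e C)"
          unfolding is_chain_in_def
        proof (intro conjI ballI)
          show "insert e C \<subseteq> P" using CP eP by blast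
          have cmp: "c \<le> e \<or> e \<le> c" if c: "c \<in> C" for c
          proof -
            obtain m where m: "m < length zs" "zs!m = Elem c" using allC[OF c] by (metis in_set_conv_nth)
            show ?thesis
            proof (cases "m \<le> i")
              case True
              then have "zs!m = zs!i \<or> ext_less (zs!m) (zs!i)" using sorted_le[OF s True] i by simp
              then have "ext_less (Elem c) (Elem e)" using z(2) e m(2) el_trans by metis
              then show ?thesis by (simp add: less_imp_le)
            next
              case False
              then have "zs!Suc i = zs!m \<or> ext_less (zs!Suc i) (zs!m)" using sorted_le[OF s, of "Suc i" m] m(1) by simp
              then have "ext_less (Elem e) (Elem c)" using z(3) e m(2) el_trans by metis
              then show ?thesis by (simp add: less_imp_le)
            qed
          qed
          fix a b assume "a \<in> insert e C" "b \<in> insert e C"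
          then show "a \<le> b \<or> b \<le> a" using cmp Cch by blast
        qed
        then have "insert e C = C" using assms(2) unfolding maximal_chain_def by blast
        then show False using False by blast
      qed
    qed
    then show "covers_ext P (zs!i) (zs!Suc i)" using lti inn by (simp add: covers_ext_def)
  qed
  have "{a. Elem a \<in> set zs} = C" using allC sA by auto
  then show ?thesis using sat hdz lz by blast
qed



context ctx begin

lemma wt_snoc: "xs \<noteq> [] \<Longrightarrow> wt (xs @ [y]) = wt xs + xe y"
  by (cases xs) (simp_all add: wt_def)

lemma wt_M1: assumes "sat_chain P zs" "hd zs = NegInf" "last zs = PosInf"
  shows "wt zs = sum xi {a. Elem a \<in> set zs} + eps"
proof -
  obtain mid where zs: "zs = NegInf # mid @ [PosInf]" using sc_shape[OF assms] by blast
  have s: "sorted_wrt ext_less (NegInf # mid @ [PosInf])" using sc_sorted[OF assms(1)] zs by simp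
  have dm: "distinct mid" using sorted_distinct[OF s] by simp
  have nP: "z \<noteq> PosInf" if "z \<in> set mid" for z
    using s that by (auto simp: sorted_wrt_append)
  have nN: "z \<noteq> NegInf" if "z \<in> set mid" for z
    using s that by auto
  define C where "C = {a. Elem a \<in> set mid}"
  have setm: "set mid = Elem ` C"
  proof (intro set_eqI iffI)
    fix z assume z: "z \<in> set mid"
    have "z \<noteq> PosInf" "z \<noteq> NegInf" using nP[OF z] nN[OF z] by auto
    then obtain a where "z = Elem a" by (cases z) auto
    then show "z \<in> Elem ` C" using z by (auto simp: C_def)
  qed (auto simp: C_def)
  have "sum_list (map xe mid) = sum xe (set mid)" using dm by (simp add: sum_list_distinct_conv_sum_set)
  also have "\<dots> = sum (xe \<circ> Elem) C" unfolding setm by (rule sum.reindex) (simp add: inj_on_def)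
  also have "\<dots> = sum xi C" by simp
  finally have e: "sum_list (map xe mid) = sum xi C" .
  have "{a. Elem a \<in> set zs} = C" using zs by (auto simp: C_def)
  then show ?thesis using e zs by (simp add: wt_def)
qed

lemma G1: assumes "in_S P eps d xi" shows "hv PosInf \<le> d"
proof -
  obtain zs where zs: "sat_chain P zs" "hd zs = NegInf" "last zs = PosInf" "hv PosInf = wt zs"
    using hv_obt[of PosInf] by auto
  have "maximal_chain P {a. Elem a \<in> set zs}" using M1_chain[OF finP zs(1-3)] .
  then have "d \<ge> sum xi {a. Elem a \<in> set zs} + eps" using assms by (simp add: in_S_def)
  then show ?thesis using zs(4) wt_M1[OF zs(1-3)] by simp
qed

lemma G2: assumes "is_generator P eps d xi" shows "d \<le> hv PosInf"
proof (rule ccontr)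
  assume a: "\<not> d \<le> hv PosInf"
  have iS: "in_S P eps d xi" using assms by (simp add: is_generator_def)
  have "in_S P 0 1 (\<lambda>_. 0)" by (simp add: in_S_def)
  moreover have "in_S P eps (d - 1) xi"
    unfolding in_S_def
  proof (intro conjI allI impI ballI)
    show "eps \<le> xi x" if "x \<in> P" for x using xi_ge that .
    fix C assume C: "maximal_chain P C"
    obtain zs where zs: "sat_chain P zs" "hd zs = NegInf" "last zs = PosInf" "{a. Elem a \<in> set zs} = C"
      using M2[OF finP C] by blast
    have "wt zs \<le> hv PosInf" using hv_ge[OF zs(1,2,3)] .
    then show "sum xi C + eps \<le> d - 1" using wt_M1[OF zs(1-3)] zs(4) a by simp
  qed
  ultimately have "\<exists>d1 \<xi>1 d2 \<xi>2. in_S P 0 d1 \<xi>1 \<and> d1 > 0 \<and> in_S P eps d2 \<xi>2 \<and>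
           d = d1 + d2 \<and> (\<forall>x\<in>P. xi x = \<xi>1 x + \<xi>2 x)"
    by (intro exI[of _ 1] exI[of _ "\<lambda>_. 0"] exI[of _ "d - 1"] exI[of _ xi]) simp
  then show False using assms unfolding is_generator_def by blast
qed

end


lemma sc_last2: "sat_chain P (xs @ [u, v]) \<Longrightarrow> covers_ext P u v"
proof (induction xs)
  case Nil then show ?case by (simp add: sc_Cons2)
next
  case (Cons a xs)
  then show ?case by (cases xs) (auto simp: sc_Cons2)
qed

lemma sum_ind: "finite C \<Longrightarrow> sum (\<lambda>v. if v \<in> A then 1 else 0 :: int) C = int (card (C \<inter> A))"
  by (simp add: sum.If_cases)

context ctx begin

lemma G3: assumes gen: "is_generator P eps d xi" shows "NegInf \<in> Xs"
proof (rule ccontr)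
  assume nX: "NegInf \<notin> Xs"
  have iS: "in_S P eps d xi" using gen by (simp add: is_generator_def)
  define A where "A = {a \<in> P. Elem a \<in> Xs \<and> \<not>(\<exists>x\<in>Xs. ext_less x (Elem a))}"
  define G where "G z \<longleftrightarrow> z = PosInf \<or> (\<exists>x\<in>Xs. x = z \<or> ext_less x z)" for z
  have crit: "u \<in> Xs" if cv: "covers_ext P u c" and hc: "hv c - hv u = xe c" and Gc: "G c"
    and nA: "\<forall>a\<in>A. c \<noteq> Elem a" for u c
  proof -
    have gd: "good u c" using cv hc qdist_cover[OF finP cv] by (auto simp: good_def covers_ext_def et_def)
    show ?thesis
    proof (cases "c = PosInf")
      case True then show ?thesis using Xs_base gd by simp
    next
      case False
      then obtain x where x: "x \<in> Xs" "x = c \<or> ext_less x c" using Gc G_def by blast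
      show ?thesis
      proof (cases "ext_less x c")
        case True then show ?thesis using Xs_step[OF gd x(1)] by blast
      next
        case f: False
        then have cX: "c \<in> Xs" using x by blast
        have "c \<noteq> NegInf" using cv by (auto simp: covers_ext_def)
        then obtain a where a: "c = Elem a" using False by (cases c) auto
        have aP: "a \<in> P" using cv a by (simp add: covers_ext_def)
        have "a \<notin> A" using nA a by blast
        then obtain x' where "x' \<in> Xs" "ext_less x' c" using cX a aP by (auto simp: A_def)
        then show ?thesis using Xs_step[OF gd] by blast
      qed
    qed
  qed
  have Asupp: "eps < xi a" if aA: "a \<in> A" for a
  proof (rule ccontr)
    assume "\<not> eps < xi a"
    have aP: "a \<in> P" and aX: "Elem a \<in> Xs" and amin: "\<not>(\<exists>x\<in>Xs. ext_less x (Elem a))"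
      using aA by (auto simp: A_def)
    have xa: "xi a = eps" using xi_ge[OF aP] \<open>\<not> eps < xi a\<close> by simp
    obtain zs where zs: "sat_chain P zs" "hd zs = NegInf" "last zs = Elem a" "hv (Elem a) = wt zs"
      using hv_obt[of "Elem a"] aP by auto
    have l2: "2 \<le> length zs" using sc_len2[OF zs(1)] zs(2,3) by simp
    define ws where "ws = butlast zs"
    have zne: "zs \<noteq> []" using l2 by auto
    have zws: "zs = ws @ [Elem a]" using zs(3) zne append_butlast_last_id[OF zne] by (simp add: ws_def)
    have "length ws = length zs - 1" by (simp add: ws_def)
    then have wsne: "ws \<noteq> []" using l2 by auto
    have "Suc (length zs - 2) = length zs - 1" using l2 by simp
    then have "take (Suc (length zs - 2)) zs = ws" by (simp add: ws_def butlast_conv_take)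
    then have wsc: "sat_chain P ws" using sc_take[OF zs(1), of "length zs - 2"] l2 by simp
    have hws: "hd ws = NegInf" using zs(2) zws wsne by simp
    define u where "u = last ws"
    have wsu: "ws = butlast ws @ [u]" using wsne by (simp add: u_def)
    have "zs = butlast ws @ [u, Elem a]" using zws wsu by (metis append.assoc append_Cons append_Nil)
    then have cov: "covers_ext P u (Elem a)" using sc_last2[of P "butlast ws" u "Elem a"] zs(1) by simp
    have h1: "wt ws \<le> hv u" using hv_ge[OF wsc hws] u_def by simp
    have c2: "sat_chain P [u, Elem a]" using cov by (simp add: sc_Cons2 covers_ext_def)
    have h2: "hv u + xi a \<le> hv (Elem a)" using hv_step[OF c2] by (simp add: wt_def)
    have "wt zs = wt ws + xi a" using zws wt_snoc[OF wsne] by simp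
    then have hd: "hv (Elem a) - hv u = eps" using h1 h2 zs(4) xa by simp
    have uin: "in_ext P u" and ult: "ext_less u (Elem a)" using cov by (auto simp: covers_ext_def)
    have gua: "good u (Elem a)" using uin ult aP hd qdist_cover[OF finP cov] xa
      by (simp add: good_def et_def)
    obtain y where y: "good (Elem a) y" "y = PosInf \<or> (\<exists>x'\<in>Xs. ext_less x' y)" using Xs_elim[OF aX] by blast
    have yin: "in_ext P y" and aly: "ext_less (Elem a) y" using y(1) by (auto simp: good_def)
    have uly: "ext_less u y" using el_trans[OF ult aly] .
    have "qdist P eps u (Elem a) + qdist P eps (Elem a) y \<le> qdist P eps u y"
      using qdist_super[OF finP uin _ yin ult aly] aP by simp
    moreover have "hv y - hv (Elem a) - et y \<le> qdist P eps (Elem a) y" using y(1) by (simp add: good_def)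
    ultimately have "hv y - hv u - et y \<le> qdist P eps u y"
      using hd qdist_cover[OF finP cov] by simp
    then have guy: "good u y" using uin yin uly by (simp add: good_def)
    have "u \<in> Xs"
    proof (cases "y = PosInf")
      case True then show ?thesis using Xs_base guy by simp
    next
      case False then show ?thesis using y(2) Xs_step[OF guy] by blast
    qed
    then show False using amin ult by blast
  qed
  have anti: "a = b" if ab: "a \<in> A" "b \<in> A" "a \<le> b" for a b
  proof (rule ccontr)
    assume "a \<noteq> b"
    then have "ext_less (Elem a) (Elem b)" using ab(3) by simp
    moreover have "Elem a \<in> Xs" using ab(1) by (simp add: A_def)
    ultimately show False using ab(2) by (auto simp: A_def)
  qed
  define x1 where "x1 v = (if v \<in> A then 1 else 0 :: int)" for v
  define x2 where "x2 v = xi v - x1 v" for v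
  have s1: "in_S P 0 1 x1"
    unfolding in_S_def
  proof (intro conjI allI impI ballI)
    show "0 \<le> x1 x" for x by (simp add: x1_def)
    fix C assume C: "maximal_chain P C"
    have CP: "C \<subseteq> P" and Cch: "\<forall>a\<in>C. \<forall>b\<in>C. a \<le> b \<or> b \<le> a"
      using C by (auto simp: maximal_chain_def is_chain_in_def)
    have fC: "finite C" using finite_subset[OF CP finP] .
    have fCA: "finite (C \<inter> A)" using fC by simp
    have "\<forall>a\<in>C \<inter> A. \<forall>b\<in>C \<inter> A. a = b"
    proof (intro ballI)
      fix a b assume a: "a \<in> C \<inter> A" and b: "b \<in> C \<inter> A"
      then have "a \<le> b \<or> b \<le> a" using Cch by blast
      then show "a = b" using anti a b by blast
    qed
    then have "card (C \<inter> A) \<le> Suc 0" using card_le_Suc0_iff_eq[OF fCA] by blast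
    then show "sum x1 C + 0 \<le> 1" using sum_ind[OF fC, of A] by (simp add: x1_def)
  qed
  have chains: "sum x2 C + eps \<le> d - 1" if C: "maximal_chain P C" for C
  proof (rule ccontr)
    assume c: "\<not> sum x2 C + eps \<le> d - 1"
    have CP: "C \<subseteq> P" using C by (auto simp: maximal_chain_def is_chain_in_def)
    have fC: "finite C" using finite_subset[OF CP finP] .
    obtain zs where zs: "sat_chain P zs" "hd zs = NegInf" "last zs = PosInf" "{a. Elem a \<in> set zs} = C"
      using M2[OF finP C] by blast
    have wtz: "wt zs = sum xi C + eps" using wt_M1[OF zs(1-3)] zs(4) by simp
    have dge: "sum xi C + eps \<le> d" using iS C by (simp add: in_S_def)
    have s2: "sum x2 C = sum xi C - sum x1 C" by (simp add: x2_def sum_subtractf)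
    have x1nn: "0 \<le> sum x1 C" by (rule sum_nonneg) (simp add: x1_def)
    have s10: "sum x1 C = 0" and wtd: "wt zs = d" using c s2 dge x1nn wtz by auto
    have noA: "a \<notin> A" if "a \<in> C" for a
    proof
      assume "a \<in> A"
      then have "x1 a \<le> sum x1 C" using that fC by (intro member_le_sum) (auto simp: x1_def)
      then show False using s10 \<open>a \<in> A\<close> by (simp add: x1_def)
    qed
    have hvP: "hv PosInf \<le> d" using G1[OF iS] .
    have hk: "hv (zs!k) = wt (take (Suc k) zs)" if k: "k < length zs" for k
    proof (rule antisym)
      have tk: "sat_chain P (take (Suc k) zs)" using sc_take[OF zs(1) k] .
      have "hd (take (Suc k) zs) = NegInf" using zs(2) k by (cases zs) auto
      moreover have "last (take (Suc k) zs) = zs!k" using k by (simp add: take_Suc_conv_app_nth)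
      ultimately show "wt (take (Suc k) zs) \<le> hv (zs!k)" using hv_ge[OF tk] by simp
      have dk: "sat_chain P (drop k zs)" using sc_drop[OF zs(1) k] .
      have "hd (drop k zs) = zs!k" using k by (simp add: hd_drop_conv_nth)
      moreover have "last (drop k zs) = PosInf" using k zs(3) by simp
      ultimately have "hv (zs!k) + wt (drop k zs) \<le> hv PosInf" using hv_step[OF dk] by simp
      moreover have "tl (drop k zs) = drop (Suc k) zs" by (simp add: drop_Suc tl_drop)
      then have "take (Suc k) zs @ tl (drop k zs) = zs" by simp
      then have "wt zs = wt (take (Suc k) zs) + wt (drop k zs)"
        using wt_app[of "take (Suc k) zs" "drop k zs"] k by (cases zs) auto
      ultimately show "hv (zs!k) \<le> wt (take (Suc k) zs)" using hvP wtd by simp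
    qed
    have step: "hv (zs!Suc k) - hv (zs!k) = xe (zs!Suc k)" if k: "Suc k < length zs" for k
    proof -
      have "take (Suc (Suc k)) zs = take (Suc k) zs @ [zs!Suc k]" using k by (simp add: take_Suc_conv_app_nth)
      then have "wt (take (Suc (Suc k)) zs) = wt (take (Suc k) zs) + xe (zs!Suc k)"
        using wt_snoc[of "take (Suc k) zs" "zs!Suc k"] k by (cases zs) auto
      then show ?thesis using hk[OF k] hk[of k] k by simp
    qed
    have notG: "\<not> G (zs!k)" if "k < length zs" for k
      using that
    proof (induction k)
      case 0
      have "zs!0 = NegInf" using zs(2) 0 by (cases zs) auto
      then show ?case using nX by (auto simp: G_def)
    next
      case (Suc k)
      show ?case
      proof
        assume Gk: "G (zs!Suc k)"
        have cv: "covers_ext P (zs!k) (zs!Suc k)" using zs(1) Suc.prems by (simp add: sat_chain_def)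
        have nA: "\<forall>a\<in>A. zs!Suc k \<noteq> Elem a"
        proof (intro ballI notI)
          fix a assume a: "a \<in> A" "zs!Suc k = Elem a"
          then have "Elem a \<in> set zs" using Suc.prems by (metis nth_mem)
          then have "a \<in> C" using zs(4) by auto
          then show False using noA a(1) by blast
        qed
        have "zs!k \<in> Xs" using crit[OF cv step[OF Suc.prems] Gk nA] .
        then have "G (zs!k)" by (auto simp: G_def)
        then show False using Suc.IH Suc.prems by simp
      qed
    qed
    have "zs!(length zs - 1) = PosInf" using zs(3) zs(1) by (simp add: last_conv_nth sat_chain_def)
    moreover have "length zs - 1 < length zs" using zs(1) by (cases zs) (auto simp: sat_chain_def)
    ultimately show False using notG[of "length zs - 1"] by (simp add: G_def)
  qed
  have s2: "in_S P eps (d - 1) x2"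
    unfolding in_S_def
  proof (intro conjI allI impI ballI)
    fix x assume xP: "x \<in> P"
    show "eps \<le> x2 x"
    proof (cases "x \<in> A")
      case True then show ?thesis using Asupp[OF True] by (simp add: x2_def x1_def)
    next
      case False then show ?thesis using xi_ge[OF xP] by (simp add: x2_def x1_def)
    qed
  next
    fix C assume "maximal_chain P C"
    then show "sum x2 C + eps \<le> d - 1" by (rule chains)
  qed
  have "\<exists>d1 \<xi>1 d2 \<xi>2. in_S P 0 d1 \<xi>1 \<and> d1 > 0 \<and> in_S P eps d2 \<xi>2 \<and>
           d = d1 + d2 \<and> (\<forall>x\<in>P. xi x = \<xi>1 x + \<xi>2 x)"
    using s1 s2 by (intro exI[of _ 1] exI[of _ x1] exI[of _ "d - 1"] exI[of _ x2]) (simp add: x2_def)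
  then show False using gen unfolding is_generator_def by blast
qed

end


lemma condN_t: assumes "finite P" "condN P t x y" shows "t \<le> card P"
proof -
  have inj: "inj_on y {..<t}"
  proof (rule inj_onI)
    fix i k assume i: "i \<in> {..<t}" and k: "k \<in> {..<t}" and e: "y i = y k"
    show "i = k"
    proof (rule ccontr)
      assume "i \<noteq> k"
      then consider "i < k" | "k < i" by linarith
      then show False
      proof cases
        case 1
        have "x (Suc k) < y k" using assms(2) k by (simp add: condN_def)
        moreover have "\<not> x (Suc k) < y i" using assms(2) i k 1 unfolding condN_def by auto
        ultimately show False using e by simp
      next
        case 2
        have "x (Suc i) < y i" using assms(2) i by (simp add: condN_def)
        moreover have "\<not> x (Suc i) < y k" using assms(2) i k 2 unfolding condN_def by auto
        ultimately show False using e by simp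
      qed
    qed
  qed
  have "y ` {..<t} \<subseteq> P" using assms(2) by (auto simp: condN_def)
  then have "card {..<t} \<le> card P" using card_inj_on_le[OF inj _ assms(1)] by blast
  then show ?thesis by simp
qed

lemma qdist_bound: assumes "finite P"
  shows "\<bar>qdist P e u v\<bar> \<le> \<bar>e\<bar> * int (card {z. in_ext P z}) + \<bar>Max ({}::int set)\<bar>"
proof -
  let ?S = "{zs. sat_chain P zs \<and> hd zs = u \<and> last zs = v}"
  let ?K = "\<bar>e\<bar> * int (card {z. in_ext P z}) + \<bar>Max ({}::int set)\<bar>"
  have q: "qdist P e u v = Max ((\<lambda>zs. e * int (length zs - 1)) ` ?S)" unfolding qdist_def qdist_set ..
  show ?thesis
  proof (cases "?S = {}")
    case True
    then have "qdist P e u v = Max ({}::int set)" using q by (metis image_empty)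
    moreover have "0 \<le> \<bar>e\<bar> * int (card {z. in_ext P z})" by simp
    ultimately show ?thesis by linarith
  next
    case False
    have "qdist P e u v \<in> (\<lambda>zs. e * int (length zs - 1)) ` ?S"
      unfolding q by (rule Max_in) (use fin_chains[OF assms] False in auto)
    then obtain zs where zs: "zs \<in> ?S" "qdist P e u v = e * int (length zs - 1)" by blast
    have "length zs \<le> card {z. in_ext P z}" using sc_length[OF assms] zs(1) by blast
    then have "\<bar>e * int (length zs - 1)\<bar> \<le> \<bar>e\<bar> * int (card {z. in_ext P z})"
      by (simp add: abs_mult mult_left_mono)
    then show ?thesis using zs(2) by simp
  qed
qed

lemma qseq_bound: assumes "\<And>u v. \<bar>qdist P e u v\<bar> \<le> K"
  shows "\<bar>qseq P e w z s\<bar> \<le> (2 * int s + 1) * K"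
proof -
  have a: "\<bar>\<Sum>l\<in>{0..s}. qdist P e (w l) (z l)\<bar> \<le> (int s + 1) * K"
  proof -
    have "\<bar>\<Sum>l\<in>{0..s}. qdist P e (w l) (z l)\<bar> \<le> (\<Sum>l\<in>{0..s}. \<bar>qdist P e (w l) (z l)\<bar>)" by (rule sum_abs)
    also have "\<dots> \<le> (\<Sum>l\<in>{0..s}. K)" by (rule sum_mono) (rule assms)
    finally show ?thesis by (simp add: algebra_simps)
  qed
  have b: "\<bar>\<Sum>l<s. qdist P e (w (Suc l)) (z l)\<bar> \<le> int s * K"
  proof -
    have "\<bar>\<Sum>l<s. qdist P e (w (Suc l)) (z l)\<bar> \<le> (\<Sum>l<s. \<bar>qdist P e (w (Suc l)) (z l)\<bar>)" by (rule sum_abs)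
    also have "\<dots> \<le> (\<Sum>l<s. K)" by (rule sum_mono) (rule assms)
    finally show ?thesis by simp
  qed
  show ?thesis using a b unfolding qseq_def by (simp add: algebra_simps abs_le_iff)
qed

theorem mainTheorem9:
  fixes P :: "'a::order set" and \<epsilon> d :: int and \<xi> :: "'a \<Rightarrow> int"
  assumes "finite P"
    and "\<epsilon> \<in> {1, -1}"
    and "is_generator P \<epsilon> d \<xi>"
  shows "d \<le> Max {qseq P \<epsilon> (xseq x) (yseq t y) t | t x y.
                    condN P t x y \<and> q_reduced P \<epsilon> t x y}"
proof -
  have iS: "in_S P \<epsilon> d \<xi>" using assms(3) by (simp add: is_generator_def)
  have xg: "\<And>a. a \<in> P \<Longrightarrow> \<epsilon> \<le> \<xi> a" using iS by (simp add: in_S_def)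
  interpret c: ctx P \<epsilon> \<xi> by unfold_locales (use assms(1) xg in auto)
  have "NegInf \<in> c.Xs" using c.G3[OF assms(3)] .
  then obtain t x y where txy: "condN P t x y" "q_reduced P \<epsilon> t x y"
    "c.hv PosInf \<le> qseq P \<epsilon> (xseq x) (yseq t y) t" using c.min_path by blast
  have dle: "d \<le> c.hv PosInf" using c.G2[OF assms(3)] .
  let ?S = "{qseq P \<epsilon> (xseq x) (yseq t y) t | t x y. condN P t x y \<and> q_reduced P \<epsilon> t x y}"
  let ?K = "\<bar>\<epsilon>\<bar> * int (card {z. in_ext P z}) + \<bar>Max ({}::int set)\<bar>"
  have K: "\<And>u v. \<bar>qdist P \<epsilon> u v\<bar> \<le> ?K" using qdist_bound[OF assms(1)] by blast
  have K0: "0 \<le> ?K" by simp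
  let ?B = "(2 * int (card P) + 1) * ?K"
  have "?S \<subseteq> {-?B..?B}"
  proof
    fix v assume "v \<in> ?S"
    then obtain t x y where v: "v = qseq P \<epsilon> (xseq x) (yseq t y) t" "condN P t x y" by blast
    have "t \<le> card P" using condN_t[OF assms(1) v(2)] .
    then have "(2 * int t + 1) * ?K \<le> ?B" using K0 by (intro mult_right_mono) auto
    moreover have "\<bar>v\<bar> \<le> (2 * int t + 1) * ?K" using qseq_bound[OF K] v(1) by blast
    ultimately show "v \<in> {-?B..?B}" by (simp add: abs_le_iff)
  qed
  then have fin: "finite ?S" using finite_subset by blast
  have mem: "qseq P \<epsilon> (xseq x) (yseq t y) t \<in> ?S" using txy by blast
  have "qseq P \<epsilon> (xseq x) (yseq t y) t \<le> Max ?S" using Max_ge[OF fin mem] .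
  then show ?thesis using dle txy(3) by linarith
qed


end
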